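(* Let $\varepsilon$ be a random variable with distribution $p$ on a measurable space $\mathcal{E}$, let $f:\mathcal{E}\times\mathbb{R}^d\to\mathbb{R}$, and let $F(\theta)=\mathbb{E}_{\varepsilon\sim p}[f(\varepsilon,\theta)]$ with minimizer $\theta^*$; assume all expectations below are finite and gradient and expectation may be interchanged. Let $c:\mathcal{E}\times\mathbb{R}^d\to\mathbb{R}^d$ satisfy $\mathbb{E}_{\varepsilon}[c(\varepsilon,\theta)]=0$ for every $\theta$. Assume, for constants $L,H>0$, $\bar M\ge0$: (A1) for every $\varepsilon$, $\theta\mapsto f(\varepsilon,\theta)$ is differentiable and $L$-smooth: $\|\nabla_\theta f(\varepsilon,\theta)-\nabla_\theta f(\varepsilon,\theta')\|_2\le L\|\theta-\theta'\|_2$; (A2) for every $\varepsilon$, $\theta\mapsto f(\varepsilon,\theta)$ is $H$-strongly convex; (A4) for every $\theta$, $\mathbb{E}_{\varepsilon}\big[\|\nabla_\theta f(\varepsilon,\theta^* )-c(\varepsilon,\theta)\|_2^2\big]\le \bar M$. Fix $\theta_0\in\mathbb{R}^d$, let $\varepsilon_0,\varepsilon_1,\dots$ be i.i.d. with law $p$, and define for $t\ge1$ $$\theta_t=\theta_{t-1}-\eta\big(\nabla_\theta f(\varepsilon_{t-1},\theta_{t-1})-c(\varepsilon_{t-1},\theta_{t-1})\big).$$ If $0<\eta\le\frac{1}{2L}$ and $\bar\rho=1-\eta H(1-2L\eta)$ (with $\bar\rho\neq1$), then for all $t\ge0$, $$\mathbb{E}\big[\|\theta_t-\theta^*\|_2^2\big]\le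 \bar\rho^{\,t}\,\|\theta_0-\theta^*\|_2^2+\frac{2\eta^2\bar M\,(\bar\rho^{\,t}-1)}{\bar\rho-1}.$$
   Context: $\nabla_\theta$ is the gradient in the parameter $\theta$. The update is a stochastic gradient step in which the stochastic gradient is corrected by a zero-mean control variate $c$. *)

theory Defs
  imports "HOL-Probability.Probability"
begin

definition strongly_convex_on :: "'a::real_inner set \<Rightarrow> real \<Rightarrow> ('a \<Rightarrow> real) \<Rightarrow> bool" where
  "strongly_convex_on S H g \<longleftrightarrow> convex_on S (\<lambda>x. g x - (H / 2) * (norm x)\<^sup>2)"

end

theory Submission imports Defs begin

lemma descent:
  fixes phi :: "'a::real_inner \<Rightarrow> real"
  assumes D: "\<And>x. (phi has_derivative (\<lambda>h. G x \<bullet> h)) (at x)"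
    and Lip: "\<And>x y. norm (G x - G y) \<le> L * norm (x - y)" and L0: "0 \<le> L"
  shows "phi b \<le> phi a + G a \<bullet> (b - a) + L * (norm (b - a))\<^sup>2"
proof -
  have "norm (phi b - phi a - G a \<bullet> (b - a)) \<le> norm (b - a) * (L * norm (b - a))"
  proof (rule differentiable_bound_linearization[where S="closed_segment a b" and f'="\<lambda>x h. G x \<bullet> h"])
    fix t :: real assume "t \<in> {0..1}"
    then show "a + t *\<^sub>R (b - a) \<in> closed_segment a b"
      by (simp add: in_segment(1)) (rule exI[of _ t], auto simp: algebra_simps)
  next
    fix x assume "x \<in> closed_segment a b"
    show "(phi has_derivative (\<lambda>h. G x \<bullet> h)) (at x within closed_segment a b)"
      by (rule has_derivative_at_withinI[OF D])
  next
    fix x assume x: "x \<in> closed_segment a b"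
    have "onorm (\<lambda>h. (G x - G a) \<bullet> h) \<le> L * norm (b - a)"
    proof (rule onorm_bound)
      show "0 \<le> L * norm (b - a)" using L0 by simp
      fix h
      have "norm ((G x - G a) \<bullet> h) \<le> norm (G x - G a) * norm h"
        by (simp add: Cauchy_Schwarz_ineq2)
      also have "\<dots> \<le> L * norm (x - a) * norm h" by (intro mult_right_mono Lip) auto
      also have "\<dots> \<le> L * norm (b - a) * norm h"
        using segment_bound(1)[OF x] L0 by (intro mult_right_mono mult_left_mono) auto
      finally show "norm ((G x - G a) \<bullet> h) \<le> L * norm (b - a) * norm h" .
    qed
    moreover have "(\<lambda>h. G x \<bullet> h) - (\<lambda>h. G a \<bullet> h) = (\<lambda>h. (G x - G a) \<bullet> h)"
      by (simp add: fun_eq_iff inner_diff_left)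
    ultimately show "onorm ((\<lambda>h. G x \<bullet> h) - (\<lambda>h. G a \<bullet> h)) \<le> L * norm (b - a)" by simp
  qed simp
  then have "phi b - phi a - G a \<bullet> (b - a) \<le> norm (b - a) * (L * norm (b - a))" by (simp add: abs_le_iff)
  then show ?thesis by (simp add: power2_eq_square mult_ac)
qed

lemma first_order:
  fixes phi :: "'a::real_inner \<Rightarrow> real"
  assumes D: "\<And>x. (phi has_derivative (\<lambda>h. G x \<bullet> h)) (at x)"
    and SC: "strongly_convex_on UNIV H phi"
  shows "phi y \<ge> phi x + G x \<bullet> (y - x) + H / 2 * (norm (y - x))\<^sup>2"
proof -
  define psi where "psi w = phi w - H / 2 * (w \<bullet> w)" for w
  have cpsi: "convex_on UNIV psi" using SC unfolding strongly_convex_on_def psi_def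
    by (simp add: power2_norm_eq_inner)
  define r where "r t = psi (x + t *\<^sub>R (y - x))" for t
  have cr: "convex_on UNIV r"
    unfolding convex_on_def r_def
  proof (intro conjI ballI allI impI)
    fix s t u v :: real assume uv: "0 \<le> u" "0 \<le> v" "u + v = 1"
    have "x + (u *\<^sub>R s + v *\<^sub>R t) *\<^sub>R (y - x) = u *\<^sub>R (x + s *\<^sub>R (y - x)) + v *\<^sub>R (x + t *\<^sub>R (y - x))"
      using uv by (simp add: algebra_simps flip: scaleR_add_left)
    then show "psi (x + (u *\<^sub>R s + v *\<^sub>R t) *\<^sub>R (y - x)) \<le> u * psi (x + s *\<^sub>R (y - x)) + v * psi (x + t *\<^sub>R (y - x))"
      using cpsi uv unfolding convex_on_def by simp
  qed simp
  have Dpsi: "(psi has_derivative (\<lambda>h. G w \<bullet> h - H / 2 * (h \<bullet> w + w \<bullet> h))) (at w)" for w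
    unfolding psi_def using D[of w] by (auto intro!: derivative_eq_intros)
  have "(r has_derivative (\<lambda>t. G x \<bullet> (t *\<^sub>R (y - x)) - H / 2 * ((t *\<^sub>R (y - x)) \<bullet> x + x \<bullet> (t *\<^sub>R (y - x))))) (at 0)"
  proof -
    have d1: "((\<lambda>t. x + t *\<^sub>R (y - x)) has_derivative (\<lambda>t. t *\<^sub>R (y-x))) (at 0)"
      by (auto intro!: derivative_eq_intros)
    show ?thesis using has_derivative_compose[OF d1 Dpsi[of "x + 0 *\<^sub>R (y-x)"]]
      by (simp add: r_def[abs_def])
  qed
  then have "(r has_field_derivative (G x \<bullet> (y - x) - H * (x \<bullet> (y - x)))) (at 0 within UNIV)"
    unfolding has_field_derivative_def
    by (rule has_derivative_eq_rhs) (auto simp: fun_eq_iff algebra_simps inner_commute)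
  from convex_on_imp_above_tangent[OF cr _ _ _ this] have
    "r 1 - r 0 \<ge> (G x \<bullet> (y - x) - H * (x \<bullet> (y - x))) * (1 - 0)" by (simp del: mult_1_right)
  then show ?thesis
    unfolding r_def psi_def by (simp add: power2_norm_eq_inner algebra_simps inner_commute)
qed

lemma cocoercive_half:
  fixes phi :: "'a::real_inner \<Rightarrow> real"
  assumes D: "\<And>x. (phi has_derivative (\<lambda>h. G x \<bullet> h)) (at x)"
    and Lip: "\<And>x y. norm (G x - G y) \<le> L * norm (x - y)" and L0: "0 < L"
    and SC: "strongly_convex_on UNIV H phi" and H0: "0 \<le> H"
  shows "phi y - phi x - G x \<bullet> (y - x) \<ge> (1 / (2 * L)) / 2 * (norm (G y - G x))\<^sup>2"
proof -
  define v where "v = G y - G x"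
  define k where "k = 1 / (2 * L)"
  define z where "z = y - k *\<^sub>R v"
  have f1: "phi z \<ge> phi x + G x \<bullet> (z - x) + H / 2 * (norm (z - x))\<^sup>2"
    by (rule first_order[OF D SC])
  have f1': "phi z \<ge> phi x + G x \<bullet> (z - x)" using f1 H0 by (smt (verit) mult_nonneg_nonneg zero_le_power2 divide_nonneg_nonneg)
  have f2: "phi z \<le> phi y + G y \<bullet> (z - y) + L * (norm (z - y))\<^sup>2"
    by (rule descent[OF D Lip]) (use L0 in simp)
  have e1: "G x \<bullet> (z - x) = G x \<bullet> (y - x) - k * (G x \<bullet> v)"
    by (simp add: z_def inner_diff_right algebra_simps)
  have e2: "G y \<bullet> (z - y) = - (k * (G y \<bullet> v))"
    by (simp add: z_def inner_diff_right algebra_simps)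
  have e3: "(norm (z - y))\<^sup>2 = k * k * (norm v)\<^sup>2"
    by (simp add: z_def power2_eq_square)
  have e4: "k * (G y \<bullet> v) - k * (G x \<bullet> v) = k * (norm v)\<^sup>2"
    by (simp add: v_def power2_norm_eq_inner inner_diff_left algebra_simps)
  have e5: "L * (k * k * (norm v)\<^sup>2) = k / 2 * (norm v)\<^sup>2"
    using L0 by (simp add: k_def field_simps power2_eq_square)
  have e6: "k * (norm v)\<^sup>2 = k / 2 * (norm v)\<^sup>2 + k / 2 * (norm v)\<^sup>2" by simp
  have e7: "L * (norm (z - y))\<^sup>2 = k / 2 * (norm v)\<^sup>2" using e3 e5 by simp
  show ?thesis using f1' f2 e1 e2 e7 e4 e6 unfolding k_def[symmetric] v_def[symmetric] by linarith
qed

lemma cocoercive: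
  fixes phi :: "'a::real_inner \<Rightarrow> real"
  assumes D: "\<And>x. (phi has_derivative (\<lambda>h. G x \<bullet> h)) (at x)"
    and Lip: "\<And>x y. norm (G x - G y) \<le> L * norm (x - y)" and L0: "0 < L"
    and SC: "strongly_convex_on UNIV H phi" and H0: "0 \<le> H"
  shows "(norm (G y - G x))\<^sup>2 \<le> 2 * L * ((G y - G x) \<bullet> (y - x))"
proof -
  have a: "phi y - phi x - G x \<bullet> (y - x) \<ge> (1 / (2 * L)) / 2 * (norm (G y - G x))\<^sup>2"
    by (rule cocoercive_half[OF D Lip L0 SC H0])
  have b: "phi x - phi y - G y \<bullet> (x - y) \<ge> (1 / (2 * L)) / 2 * (norm (G x - G y))\<^sup>2"
    by (rule cocoercive_half[OF D Lip L0 SC H0])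
  have n: "norm (G x - G y) = norm (G y - G x)" by (rule norm_minus_commute)
  have s: "(G y - G x) \<bullet> (y - x) = G y \<bullet> (y - x) - G x \<bullet> (y - x)" by (simp add: inner_diff_left)
  have s2: "G y \<bullet> (x - y) = - (G y \<bullet> (y - x))" by (simp add: inner_diff_right)
  have "(1 / (2 * L)) * (norm (G y - G x))\<^sup>2 \<le> (G y - G x) \<bullet> (y - x)"
    using a b[unfolded n] s s2
      by (simp add: algebra_simps)
  then show ?thesis using L0 by (simp add: field_simps)
qed

lemma strong_mono:
  fixes phi :: "'a::real_inner \<Rightarrow> real"
  assumes D: "\<And>x. (phi has_derivative (\<lambda>h. G x \<bullet> h)) (at x)"
    and SC: "strongly_convex_on UNIV H phi"
  shows "H * (norm (y - x))\<^sup>2 \<le> (G y - G x) \<bullet> (y - x)"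
proof -
  have a: "phi y \<ge> phi x + G x \<bullet> (y - x) + H / 2 * (norm (y - x))\<^sup>2" by (rule first_order[OF D SC])
  have b: "phi x \<ge> phi y + G y \<bullet> (x - y) + H / 2 * (norm (x - y))\<^sup>2" by (rule first_order[OF D SC])
  have n: "norm (x - y) = norm (y - x)" by (rule norm_minus_commute)
  have s: "(G y - G x) \<bullet> (y - x) = G y \<bullet> (y - x) - G x \<bullet> (y - x)" by (simp add: inner_diff_left)
  have s2: "G y \<bullet> (x - y) = - (G y \<bullet> (y - x))" by (simp add: inner_diff_right)
  have h: "H / 2 * (norm (y - x))\<^sup>2 + H / 2 * (norm (y - x))\<^sup>2 = H * (norm (y - x))\<^sup>2" by simp
  show ?thesis using a b[unfolded n] s s2 h by linarith
qed

lemma step_alg: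
  fixes d D r :: "'a::real_inner"
  assumes c1: "(norm D)\<^sup>2 \<le> 2 * L * (D \<bullet> d)" and c2: "H * (norm d)\<^sup>2 \<le> D \<bullet> d"
    and eta: "0 < eta" "2 * L * eta \<le> 1" and H0: "0 \<le> H"
  shows "(norm (d - eta *\<^sub>R (D + r)))\<^sup>2 \<le> (1 - eta * H * (1 - 2 * L * eta)) * (norm d)\<^sup>2 - 2 * eta * (d \<bullet> r) + 2 * eta\<^sup>2 * (norm r)\<^sup>2"
proof -
  have ex: "(norm (d - eta *\<^sub>R (D + r)))\<^sup>2 = (norm d)\<^sup>2 - 2 * eta * (D \<bullet> d) - 2 * eta * (d \<bullet> r) + eta\<^sup>2 * (norm (D + r))\<^sup>2"
    by (simp add: power2_norm_eq_inner inner_diff_left inner_diff_right inner_add_left inner_add_right algebra_simps inner_commute) (simp add: power2_eq_square algebra_simps)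
  have pl: "(norm (D + r))\<^sup>2 \<le> 2 * (norm D)\<^sup>2 + 2 * (norm r)\<^sup>2"
  proof -
    have "0 \<le> (norm (D - r))\<^sup>2" by simp
    then show ?thesis
      by (simp add: power2_norm_eq_inner inner_diff_left inner_diff_right inner_add_left inner_add_right algebra_simps inner_commute)
  qed
  have m1: "eta\<^sup>2 * (norm (D + r))\<^sup>2 \<le> eta\<^sup>2 * (2 * (norm D)\<^sup>2 + 2 * (norm r)\<^sup>2)"
    using pl by (intro mult_left_mono) auto
  have m2: "eta\<^sup>2 * (norm D)\<^sup>2 \<le> eta\<^sup>2 * (2 * L * (D \<bullet> d))"
    using c1 by (intro mult_left_mono) auto
  have m3: "2 * eta * (1 - 2 * L * eta) * (H * (norm d)\<^sup>2) \<le> 2 * eta * (1 - 2 * L * eta) * (D \<bullet> d)"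
    using c2 eta by (intro mult_left_mono) auto
  have m4: "0 \<le> eta * H * (1 - 2 * L * eta) * (norm d)\<^sup>2"
    using eta H0 by auto
  have "(norm (d - eta *\<^sub>R (D + r)))\<^sup>2 \<le> (norm d)\<^sup>2 - 2 * eta * (1 - 2 * L * eta) * (D \<bullet> d) - 2 * eta * (d \<bullet> r) + 2 * eta\<^sup>2 * (norm r)\<^sup>2"
    using ex m1 m2 by (simp add: algebra_simps power2_eq_square)
  also have "\<dots> \<le> (norm d)\<^sup>2 - 2 * eta * (1 - 2 * L * eta) * (H * (norm d)\<^sup>2) - 2 * eta * (d \<bullet> r) + 2 * eta\<^sup>2 * (norm r)\<^sup>2"
    using m3 by linarith
  also have "\<dots> \<le> (1 - eta * H * (1 - 2 * L * eta)) * (norm d)\<^sup>2 - 2 * eta * (d \<bullet> r) + 2 * eta\<^sup>2 * (norm r)\<^sup>2"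
    using m4 by (simp add: algebra_simps)
  finally show ?thesis .
qed


primrec Titer :: "('e \<Rightarrow> 'a \<Rightarrow> 'a) \<Rightarrow> 'a \<Rightarrow> nat \<Rightarrow> (nat \<Rightarrow> 'e) \<Rightarrow> 'a" where
  "Titer s a 0 x = a"
| "Titer s a (Suc t) x = s (x t) (Titer s a t x)"

lemma Titer_cong: "(\<And>i. i < t \<Longrightarrow> x i = y i) \<Longrightarrow> Titer s a t x = Titer s a t y"
  by (induction t) auto

lemma Titer_meas:
  fixes s :: "'e \<Rightarrow> 'a::euclidean_space \<Rightarrow> 'a"
  assumes sm: "(\<lambda>(e, \<theta>). s e \<theta>) \<in> borel_measurable (p \<Otimes>\<^sub>M borel)"
  shows "t \<le> n \<Longrightarrow> Titer s a t \<in> borel_measurable (Pi\<^sub>M {..<n} (\<lambda>_. p))"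
proof (induction t)
  case 0 then show ?case by simp
next
  case (Suc t)
  then have IH: "Titer s a t \<in> borel_measurable (Pi\<^sub>M {..<n} (\<lambda>_. p))" by simp
  have c: "(\<lambda>x. x t) \<in> measurable (Pi\<^sub>M {..<n} (\<lambda>_. p)) p"
    using Suc.prems by (intro measurable_component_singleton) auto
  have "(\<lambda>x. (\<lambda>(e, \<theta>). s e \<theta>) (x t, Titer s a t x)) \<in> borel_measurable (Pi\<^sub>M {..<n} (\<lambda>_. p))"
    by (rule measurable_compose[OF measurable_Pair[OF c IH] sm])
  then show ?case by simp
qed

lemma step_meas:
  fixes gradf c :: "'e \<Rightarrow> 'a::euclidean_space \<Rightarrow> 'a"
  assumes g: "(\<lambda>(e, \<theta>). gradf e \<theta>) \<in> borel_measurable (p \<Otimes>\<^sub>M borel)"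
    and c: "(\<lambda>(e, \<theta>). c e \<theta>) \<in> borel_measurable (p \<Otimes>\<^sub>M borel)"
  shows "(\<lambda>(e, \<theta>). \<theta> - eta *\<^sub>R (gradf e \<theta> - c e \<theta>)) \<in> borel_measurable (p \<Otimes>\<^sub>M borel)"
proof -
  have "(\<lambda>z. snd z - eta *\<^sub>R ((\<lambda>(e, \<theta>). gradf e \<theta>) z - (\<lambda>(e, \<theta>). c e \<theta>) z)) \<in> borel_measurable (p \<Otimes>\<^sub>M borel)"
    using g c by measurable
  then show ?thesis by (simp add: case_prod_beta)
qed

lemma sec_meas:
  assumes g: "(\<lambda>(e, \<theta>). gradf e \<theta>) \<in> borel_measurable (p \<Otimes>\<^sub>M borel)"
  shows "(\<lambda>e. gradf e \<theta>) \<in> borel_measurable p"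
proof -
  have "(\<lambda>e. (\<lambda>(e, \<theta>). gradf e \<theta>) (e, \<theta>)) \<in> borel_measurable p"
    by (rule measurable_compose[OF _ g]) simp
  then show ?thesis by simp
qed

theorem mainTheorem3:
  fixes p :: "'e measure"
    and P :: "'w measure"
    and f :: "'e \<Rightarrow> 'a::euclidean_space \<Rightarrow> real"
    and gradf :: "'e \<Rightarrow> 'a \<Rightarrow> 'a"
    and c :: "'e \<Rightarrow> 'a \<Rightarrow> 'a"
    and X :: "nat \<Rightarrow> 'w \<Rightarrow> 'e"
    and theta :: "nat \<Rightarrow> 'w \<Rightarrow> 'a"
    and theta0 thetas :: 'a
    and L H Mbar eta :: real
  assumes p_prob: "prob_space p"
    and P_prob: "prob_space P"
    \<comment> \<open>gradf is the gradient of f in theta\<close>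
    and grad: "\<And>e \<theta>. e \<in> space p \<Longrightarrow> (f e has_derivative (\<lambda>h. gradf e \<theta> \<bullet> h)) (at \<theta>)"
    \<comment> \<open>measurability / finiteness of the expectations involved\<close>
    and f_meas: "\<And>\<theta>. integrable p (\<lambda>e. f e \<theta>)"
    and gradf_meas: "(\<lambda>(e, \<theta>). gradf e \<theta>) \<in> borel_measurable (p \<Otimes>\<^sub>M borel)"
    and c_meas: "(\<lambda>(e, \<theta>). c e \<theta>) \<in> borel_measurable (p \<Otimes>\<^sub>M borel)"
    and gradf_int: "\<And>\<theta>. integrable p (\<lambda>e. gradf e \<theta>)"
    and c_int: "\<And>\<theta>. integrable p (\<lambda>e. c e \<theta>)"
    and M_int: "\<And>\<theta>. integrable p (\<lambda>e. (norm (gradf e thetas - c e \<theta>))\<^sup>2)"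
    \<comment> \<open>interchange of gradient and expectation for F\<close>
    and interchange: "\<And>\<theta>. ((\<lambda>x. integral\<^sup>L p (\<lambda>e. f e x)) has_derivative
                         (\<lambda>h. integral\<^sup>L p (\<lambda>e. gradf e \<theta>) \<bullet> h)) (at \<theta>)"
    \<comment> \<open>thetas is a minimizer of F\<close>
    and minimizer: "\<And>\<theta>. integral\<^sup>L p (\<lambda>e. f e thetas) \<le> integral\<^sup>L p (\<lambda>e. f e \<theta>)"
    \<comment> \<open>zero-mean control variate\<close>
    and c_zero: "\<And>\<theta>. integral\<^sup>L p (\<lambda>e. c e \<theta>) = 0"
    and L_pos: "L > 0" and H_pos: "H > 0" and Mbar_nonneg: "Mbar \<ge> 0"
    and A1: "\<And>e \<theta> \<theta>'. e \<in> space p \<Longrightarrow> norm (gradf e \<theta> - gradf e \<theta>') \<le> L * norm (\<theta> - \<theta>')"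
    and A2: "\<And>e. e \<in> space p \<Longrightarrow> strongly_convex_on UNIV H (f e)"
    and A4: "\<And>\<theta>. integral\<^sup>L p (\<lambda>e. (norm (gradf e thetas - c e \<theta>))\<^sup>2) \<le> Mbar"
    \<comment> \<open>eps_0, eps_1, ... i.i.d. with law p\<close>
    and X_meas: "\<And>i. X i \<in> measurable P p"
    and X_distr: "\<And>i. distr P p (X i) = p"
    and X_indep: "prob_space.indep_vars P (\<lambda>_. p) X UNIV"
    \<comment> \<open>the iteration\<close>
    and theta_0: "\<And>\<omega>. theta 0 \<omega> = theta0"
    and theta_Suc: "\<And>t \<omega>. theta (Suc t) \<omega> =
        theta t \<omega> - eta *\<^sub>R (gradf (X t \<omega>) (theta t \<omega>) - c (X t \<omega>) (theta t \<omega>))"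
    and eta_pos: "0 < eta" and eta_le: "eta \<le> 1 / (2 * L)"
    and rho_ne: "1 - eta * H * (1 - 2 * L * eta) \<noteq> 1"
  shows "\<forall>t. prob_space.expectation P (\<lambda>\<omega>. (norm (theta t \<omega> - thetas))\<^sup>2)
           \<le> (1 - eta * H * (1 - 2 * L * eta)) ^ t * (norm (theta0 - thetas))\<^sup>2
             + 2 * eta\<^sup>2 * Mbar * ((1 - eta * H * (1 - 2 * L * eta)) ^ t - 1)
               / ((1 - eta * H * (1 - 2 * L * eta)) - 1)"
proof -
  interpret P: prob_space P by (rule P_prob)
  interpret p: prob_space p by (rule p_prob)
  define rho where "rho = 1 - eta * H * (1 - 2 * L * eta)"
  define s where "s e \<theta> = \<theta> - eta *\<^sub>R (gradf e \<theta> - c e \<theta>)" for e \<theta>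
  have sm: "(\<lambda>(e, \<theta>). s e \<theta>) \<in> borel_measurable (p \<Otimes>\<^sub>M borel)"
    unfolding s_def by (rule step_meas[OF gradf_meas c_meas])
  have eta2: "2 * L * eta \<le> 1" using eta_le L_pos by (simp add: field_simps)
  have g0: "integral\<^sup>L p (\<lambda>e. gradf e thetas) = 0"
  proof -
    have "(\<lambda>h. integral\<^sup>L p (\<lambda>e. gradf e thetas) \<bullet> h) = (\<lambda>v. 0)"
      by (rule differential_zero_maxmin[of thetas UNIV, OF _ _ interchange]) (use minimizer in auto)
    then have "integral\<^sup>L p (\<lambda>e. gradf e thetas) \<bullet> integral\<^sup>L p (\<lambda>e. gradf e thetas) = 0"
      by (metis (no_types, lifting))
    then show ?thesis by simp
  qed
  obtain e0 where e0: "e0 \<in> space p" using p.not_empty by auto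
  have HL: "H \<le> L"
  proof -
    obtain b :: 'a where b: "b \<in> Basis" using nonempty_Basis by blast
    have nb: "norm b = 1" using b by simp
    have "H * (norm (b - 0))\<^sup>2 \<le> (gradf e0 b - gradf e0 0) \<bullet> (b - 0)"
      by (rule strong_mono[OF grad[OF e0] A2[OF e0]])
    also have "\<dots> \<le> norm (gradf e0 b - gradf e0 0) * norm (b - 0)" by (rule norm_cauchy_schwarz)
    also have "\<dots> \<le> L * norm (b - 0) * norm (b - 0)" by (intro mult_right_mono A1[OF e0]) auto
    finally show ?thesis using nb by simp
  qed
  have rho0: "0 \<le> rho"
  proof -
    have "eta * H \<le> eta * L" using HL eta_pos by simp
    also have "\<dots> \<le> 1 / 2" using eta2 by (simp add: algebra_simps)
    finally have "eta * H * (1 - 2 * L * eta) \<le> 1 / 2 * 1"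
      using eta2 eta_pos H_pos L_pos by (intro mult_mono) auto
    then show ?thesis unfolding rho_def by simp
  qed
  have K: "(\<integral>\<^sup>+e. ennreal ((norm (s e \<theta> - thetas))\<^sup>2) \<partial>p) \<le> ennreal (rho * (norm (\<theta> - thetas))\<^sup>2 + 2 * eta\<^sup>2 * Mbar)" for \<theta>
  proof -
    define d where "d = \<theta> - thetas"
    define r where "r e = gradf e thetas - c e \<theta>" for e
    define R where "R e = rho * (norm d)\<^sup>2 - 2 * eta * (d \<bullet> r e) + 2 * eta\<^sup>2 * (norm (r e))\<^sup>2" for e
    have pw: "(norm (s e \<theta> - thetas))\<^sup>2 \<le> R e" if e: "e \<in> space p" for e
    proof -
      have eq: "s e \<theta> - thetas = d - eta *\<^sub>R ((gradf e \<theta> - gradf e thetas) + r e)"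
        by (simp add: s_def d_def r_def algebra_simps)
      have c1: "(norm (gradf e \<theta> - gradf e thetas))\<^sup>2 \<le> 2 * L * ((gradf e \<theta> - gradf e thetas) \<bullet> d)"
        unfolding d_def by (rule cocoercive[OF grad[OF e] A1[OF e] L_pos A2[OF e]]) (use H_pos in simp)
      have c2: "H * (norm d)\<^sup>2 \<le> (gradf e \<theta> - gradf e thetas) \<bullet> d"
        unfolding d_def by (rule strong_mono[OF grad[OF e] A2[OF e]])
      show ?thesis unfolding eq R_def rho_def
        by (rule step_alg[OF c1 c2 eta_pos eta2]) (use H_pos in simp)
    qed
    have rint: "integrable p r" unfolding r_def using gradf_int c_int by auto
    have Rint: "integrable p R" unfolding R_def
      using rint M_int[of \<theta>] unfolding r_def by auto
    have qm: "(\<lambda>e. (norm (s e \<theta> - thetas))\<^sup>2) \<in> borel_measurable p"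
      using sec_meas[OF sm, of \<theta>] by measurable
    have qint: "integrable p (\<lambda>e. (norm (s e \<theta> - thetas))\<^sup>2)"
      by (rule Bochner_Integration.integrable_bound[OF Rint qm])
         (auto intro!: AE_I2 simp: pw order_trans[OF _ pw])
    have I1: "(\<integral>\<^sup>+e. ennreal ((norm (s e \<theta> - thetas))\<^sup>2) \<partial>p) = ennreal (\<integral>e. (norm (s e \<theta> - thetas))\<^sup>2 \<partial>p)"
      by (rule nn_integral_eq_integral[OF qint]) auto
    have I2: "(\<integral>e. (norm (s e \<theta> - thetas))\<^sup>2 \<partial>p) \<le> integral\<^sup>L p R"
      by (rule integral_mono[OF qint Rint pw])
    have I3: "integral\<^sup>L p R = rho * (norm d)\<^sup>2 - 2 * eta * (d \<bullet> integral\<^sup>L p r) + 2 * eta\<^sup>2 * (\<integral>e. (norm (r e))\<^sup>2 \<partial>p)"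
      unfolding R_def using rint M_int[of \<theta>] unfolding r_def by (simp add: p.prob_space)
    have I4: "integral\<^sup>L p r = 0" unfolding r_def using gradf_int c_int g0 c_zero by simp
    have I5: "(\<integral>e. (norm (r e))\<^sup>2 \<partial>p) \<le> Mbar" unfolding r_def by (rule A4)
    have I6: "2 * eta\<^sup>2 * (\<integral>e. (norm (r e))\<^sup>2 \<partial>p) \<le> 2 * eta\<^sup>2 * Mbar"
      using I5 by (intro mult_left_mono) auto
    have "(\<integral>e. (norm (s e \<theta> - thetas))\<^sup>2 \<partial>p) \<le> rho * (norm (\<theta> - thetas))\<^sup>2 + 2 * eta\<^sup>2 * Mbar"
      using I2 I3 I4 I6 unfolding d_def by simp
    then show ?thesis unfolding I1 by (rule ennreal_leI)
  qed
  interpret PS: product_prob_space "\<lambda>_::nat. p" by unfold_locales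
  define n0 where "n0 = (norm (theta0 - thetas))\<^sup>2"
  define B where "B t = rho ^ t * n0 + 2 * eta\<^sup>2 * Mbar * (rho ^ t - 1) / (rho - 1)" for t
  have rho1: "rho - 1 \<noteq> 0" using rho_ne unfolding rho_def by simp
  have BS: "B (Suc t) = rho * B t + 2 * eta\<^sup>2 * Mbar" for t
    unfolding B_def using rho1 by (simp add: field_simps)
  have B0: "B 0 = n0" unfolding B_def by simp
  have Bnn: "0 \<le> B t" for t
  proof (induction t)
    case 0 then show ?case unfolding B0 n0_def by simp
  next
    case (Suc t) then show ?case unfolding BS using rho0 Mbar_nonneg by simp
  qed
  define h where "h t x = ennreal ((norm (Titer s theta0 t x - thetas))\<^sup>2)" for t x
  have hm: "h t \<in> borel_measurable (Pi\<^sub>M {..<t} (\<lambda>_. p))" for t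
    unfolding h_def using Titer_meas[OF sm, of t t theta0] by measurable
  define N where "N t = (\<integral>\<^sup>+x. h t x \<partial>Pi\<^sub>M {..<t} (\<lambda>_. p))" for t
  have space1: "emeasure (Pi\<^sub>M I (\<lambda>_::nat. p)) (space (Pi\<^sub>M I (\<lambda>_. p))) = 1" for I
    by (rule prob_space.emeasure_space_1[OF prob_space_PiM]) (rule p_prob)
  have NB: "N t \<le> ennreal (B t)" for t
  proof (induction t)
    case 0
    show ?case unfolding N_def h_def B0 n0_def by (simp add: space1)
  next
    case (Suc t)
    have ins: "{..<Suc t} = insert t {..<t}" by auto
    have "N (Suc t) = (\<integral>\<^sup>+x. (\<integral>\<^sup>+y. h (Suc t) (x(t := y)) \<partial>p) \<partial>Pi\<^sub>M {..<t} (\<lambda>_. p))"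
      unfolding N_def ins by (rule PS.product_nn_integral_insert) (use hm[of "Suc t"] ins in auto)
    also have "\<dots> = (\<integral>\<^sup>+x. (\<integral>\<^sup>+y. ennreal ((norm (s y (Titer s theta0 t x) - thetas))\<^sup>2) \<partial>p) \<partial>Pi\<^sub>M {..<t} (\<lambda>_. p))"
    proof -
      have "Titer s theta0 t (x(t := y)) = Titer s theta0 t x" for x y
        by (rule Titer_cong) auto
      then show ?thesis unfolding h_def by simp
    qed
    also have "\<dots> \<le> (\<integral>\<^sup>+x. ennreal (rho * (norm (Titer s theta0 t x - thetas))\<^sup>2) + ennreal (2 * eta\<^sup>2 * Mbar) \<partial>Pi\<^sub>M {..<t} (\<lambda>_. p))"
    proof (rule nn_integral_mono)
      fix x
      have "0 \<le> rho * (norm (Titer s theta0 t x - thetas))\<^sup>2" using rho0 by simp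
      moreover have "0 \<le> 2 * eta\<^sup>2 * Mbar" using Mbar_nonneg by simp
      ultimately show "(\<integral>\<^sup>+y. ennreal ((norm (s y (Titer s theta0 t x) - thetas))\<^sup>2) \<partial>p) \<le> ennreal (rho * (norm (Titer s theta0 t x - thetas))\<^sup>2) + ennreal (2 * eta\<^sup>2 * Mbar)"
        using K[of "Titer s theta0 t x"] by (simp add: ennreal_plus)
    qed
    also have "\<dots> = ennreal rho * N t + ennreal (2 * eta\<^sup>2 * Mbar)"
    proof -
      have m: "(\<lambda>x. ennreal (rho * (norm (Titer s theta0 t x - thetas))\<^sup>2)) \<in> borel_measurable (Pi\<^sub>M {..<t} (\<lambda>_. p))"
        using Titer_meas[OF sm, of t t theta0] by measurable
      have "(\<integral>\<^sup>+x. ennreal (rho * (norm (Titer s theta0 t x - thetas))\<^sup>2) + ennreal (2 * eta\<^sup>2 * Mbar) \<partial>Pi\<^sub>M {..<t} (\<lambda>_. p))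
          = (\<integral>\<^sup>+x. ennreal (rho * (norm (Titer s theta0 t x - thetas))\<^sup>2) \<partial>Pi\<^sub>M {..<t} (\<lambda>_. p)) + ennreal (2 * eta\<^sup>2 * Mbar)"
        by (subst nn_integral_add) (auto simp: m space1)
      also have "(\<integral>\<^sup>+x. ennreal (rho * (norm (Titer s theta0 t x - thetas))\<^sup>2) \<partial>Pi\<^sub>M {..<t} (\<lambda>_. p)) = ennreal rho * N t"
        unfolding N_def h_def using rho0 hm[of t] unfolding h_def
        by (simp add: ennreal_mult nn_integral_cmult)
      finally show ?thesis .
    qed
    also have "\<dots> \<le> ennreal rho * ennreal (B t) + ennreal (2 * eta\<^sup>2 * Mbar)"
      using Suc.IH by (intro add_mono mult_left_mono) auto
    also have "\<dots> = ennreal (B (Suc t))"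
      unfolding BS using rho0 Bnn[of t] Mbar_nonneg by (simp add: ennreal_plus ennreal_mult)
    finally show ?case .
  qed
  have th: "theta t \<omega> = Titer s theta0 t (\<lambda>i. X i \<omega>)" for t \<omega>
    by (induction t) (simp_all add: theta_0 theta_Suc s_def)
  show ?thesis
  proof
    fix t
    have RHS: "(1 - eta * H * (1 - 2 * L * eta)) ^ t * (norm (theta0 - thetas))\<^sup>2
             + 2 * eta\<^sup>2 * Mbar * ((1 - eta * H * (1 - 2 * L * eta)) ^ t - 1)
               / ((1 - eta * H * (1 - 2 * L * eta)) - 1) = B t"
      unfolding B_def rho_def n0_def by simp
    define Y where "Y \<omega> = (\<lambda>i\<in>{..<t}. X i \<omega>)" for \<omega>
    have Ym: "Y \<in> measurable P (Pi\<^sub>M {..<t} (\<lambda>_. p))"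
      unfolding Y_def by (rule measurable_restrict) (rule X_meas)
    have thY: "theta t \<omega> = Titer s theta0 t (Y \<omega>)" for \<omega>
      unfolding th Y_def by (rule Titer_cong) auto
    have hY: "(\<lambda>\<omega>. (norm (theta t \<omega> - thetas))\<^sup>2) \<in> borel_measurable P"
    proof -
      have "(\<lambda>\<omega>. Titer s theta0 t (Y \<omega>)) \<in> borel_measurable P"
        by (rule measurable_compose[OF Ym Titer_meas[OF sm]]) simp
      then show ?thesis unfolding thY by measurable
    qed
    have NP: "(\<integral>\<^sup>+\<omega>. ennreal ((norm (theta t \<omega> - thetas))\<^sup>2) \<partial>P) \<le> ennreal (B t)"
    proof (cases "t = 0")
      case True
      then show ?thesis using P.emeasure_space_1 by (simp add: theta_0 B0 n0_def)
    next
      case False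
      have ind: "P.indep_vars (\<lambda>_. p) X {..<t}"
        by (rule P.indep_vars_subset[OF X_indep]) auto
      have "distr P (Pi\<^sub>M {..<t} (\<lambda>_. p)) Y = (Pi\<^sub>M {..<t} (\<lambda>i. distr P p (X i)))"
        unfolding Y_def using P.indep_vars_iff_distr_eq_PiM[where I="{..<t}" and M'="\<lambda>_. p" and X=X] ind X_meas False
        by auto
      also have "\<dots> = Pi\<^sub>M {..<t} (\<lambda>_. p)" by (simp add: X_distr)
      finally have dist: "distr P (Pi\<^sub>M {..<t} (\<lambda>_. p)) Y = Pi\<^sub>M {..<t} (\<lambda>_. p)" .
      have "(\<integral>\<^sup>+\<omega>. ennreal ((norm (theta t \<omega> - thetas))\<^sup>2) \<partial>P) = (\<integral>\<^sup>+\<omega>. h t (Y \<omega>) \<partial>P)"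
        unfolding h_def thY ..
      also have "\<dots> = (\<integral>\<^sup>+x. h t x \<partial>distr P (Pi\<^sub>M {..<t} (\<lambda>_. p)) Y)"
        by (rule nn_integral_distr[symmetric, OF Ym]) (simp add: dist hm)
      also have "\<dots> = N t" unfolding dist N_def ..
      finally show ?thesis using NB[of t] by simp
    qed
    have "P.expectation (\<lambda>\<omega>. (norm (theta t \<omega> - thetas))\<^sup>2) = enn2real (\<integral>\<^sup>+\<omega>. ennreal ((norm (theta t \<omega> - thetas))\<^sup>2) \<partial>P)"
      by (rule integral_eq_nn_integral[OF hY]) auto
    also have "\<dots> \<le> B t" by (rule enn2real_leI[OF Bnn NP])
    finally show "P.expectation (\<lambda>\<omega>. (norm (theta t \<omega> - thetas))\<^sup>2)
           \<le> (1 - eta * H * (1 - 2 * L * eta)) ^ t * (norm (theta0 - thetas))\<^sup>2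
             + 2 * eta\<^sup>2 * Mbar * ((1 - eta * H * (1 - 2 * L * eta)) ^ t - 1)
               / ((1 - eta * H * (1 - 2 * L * eta)) - 1)" unfolding RHS .
  qed
qed
end
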